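(* Let $\mathcal{L}$ be a regular linear space of real symmetric $n\times n$ matrices whose ML degree is $0$. Then $\mathcal{L}$ has empty intersection with the interior of the cone of positive semidefinite matrices (i.e. $\mathcal{L}$ contains no positive definite matrix).
   Context: For a linear subspace $\mathcal{L}$ of symmetric matrices (its ML degree being that of its complex span in $\mathbb{S}^n$, the space of complex symmetric $n\times n$ matrices): $\mathcal{L}$ is regular if it contains a full-rank matrix; $\mathcal{L}^\perp=\{\Sigma\in\mathbb{S}^n:\mathrm{tr}(K\Sigma)=0\ \forall K\in\mathcal{L}\}$; the reciprocal variety $\mathcal{L}^{-1}$ is the Zariski closure of the set of inverses of invertible matrices in $\mathcal{L}$; the ML degree is the number of matrices in $\mathcal{L}^{-1}\cap(\mathcal{L}^\perp+S)$ for generic $S\in\mathbb{S}^n$. *)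

theory Defs
  imports "HOL-Analysis.Analysis"
begin

definition cmat :: "real^'n^'n \<Rightarrow> complex^'n^'n" where
  "cmat K = (\<chi> i j. complex_of_real (K $ i $ j))"

definition cspan :: "(real^'n^'n) set \<Rightarrow> (complex^'n^'n) set" where
  "cspan L = {A. \<exists>S c. finite S \<and> S \<subseteq> L \<and>
      A = (\<Sum>K\<in>S. (\<chi> i j. c K * (cmat K) $ i $ j))}"

definition symC :: "(complex^'n^'n) set" where
  "symC = {A. transpose A = A}"

definition perpC :: "(complex^'n^'n) set \<Rightarrow> (complex^'n^'n) set" where
  "perpC LC = {Sig \<in> symC. \<forall>K\<in>LC. trace (K ** Sig) = 0}"

inductive poly_fun :: "(complex^'n^'n \<Rightarrow> complex) \<Rightarrow> bool" where
  pf_const: "poly_fun (\<lambda>A. c)"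
| pf_coord: "poly_fun (\<lambda>A. A $ i $ j)"
| pf_add: "poly_fun p \<Longrightarrow> poly_fun q \<Longrightarrow> poly_fun (\<lambda>A. p A + q A)"
| pf_mult: "poly_fun p \<Longrightarrow> poly_fun q \<Longrightarrow> poly_fun (\<lambda>A. p A * q A)"

definition zariski_closed :: "(complex^'n^'n) set \<Rightarrow> bool" where
  "zariski_closed Z \<longleftrightarrow> (\<exists>P. (\<forall>p\<in>P. poly_fun p) \<and> Z = {A. \<forall>p\<in>P. p A = 0})"

definition zariski_closure :: "(complex^'n^'n) set \<Rightarrow> (complex^'n^'n) set" where
  "zariski_closure X = \<Inter> {Z. zariski_closed Z \<and> X \<subseteq> Z}"

definition reciprocal :: "(complex^'n^'n) set \<Rightarrow> (complex^'n^'n) set" where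
  "reciprocal LC = zariski_closure {matrix_inv A | A. A \<in> LC \<and> invertible A}"

text \<open>L (a real space of symmetric matrices) has ML degree d: for generic S in S^n
  (i.e. outside the zero set of a polynomial not vanishing identically on S^n),
  the set L^{-1} \<inter> (L^\<perp> + S) of its complex span is finite of cardinality d.\<close>
definition has_ml_degree :: "(real^'n^'n) set \<Rightarrow> nat \<Rightarrow> bool" where
  "has_ml_degree L d \<longleftrightarrow>
     (\<exists>p. poly_fun p \<and> (\<exists>S\<in>symC. p S \<noteq> 0) \<and>
        (\<forall>S\<in>symC. p S \<noteq> 0 \<longrightarrow>
           (let X = reciprocal (cspan L) \<inter> {Sig + S | Sig. Sig \<in> perpC (cspan L)}
            in finite X \<and> card X = d)))"

definition regular :: "(real^'n^'n) set \<Rightarrow> bool" where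
  "regular L \<longleftrightarrow> (\<exists>K\<in>L. invertible K)"

definition pos_def :: "real^'n^'n \<Rightarrow> bool" where
  "pos_def K \<longleftrightarrow> transpose K = K \<and> (\<forall>x. x \<noteq> 0 \<longrightarrow> x \<bullet> (K *v x) > 0)"

end

theory Submission
  imports Defs "HOL-Computational_Algebra.Polynomial"
begin


lemma poly_fun_line:
  fixes X Y :: "complex^'n^'n"
  assumes "poly_fun p"
  shows "\<exists>q. \<forall>t. p (\<chi> i j. X$i$j + t * Y$i$j) = poly q t"
  using assms
proof (induction rule: poly_fun.induct)
  case (pf_const c)
  then show ?case by (intro exI[of _ "[:c:]"]) simp
next
  case (pf_coord i j)
  then show ?case by (intro exI[of _ "[:X$i$j, Y$i$j:]"]) (simp add: algebra_simps)
next
  case (pf_add p q)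
  then obtain a b where "\<forall>t. p (\<chi> i j. X$i$j + t * Y$i$j) = poly a t"
     "\<forall>t. q (\<chi> i j. X$i$j + t * Y$i$j) = poly b t" by blast
  then show ?case by (intro exI[of _ "a + b"]) simp
next
  case (pf_mult p q)
  then obtain a b where "\<forall>t. p (\<chi> i j. X$i$j + t * Y$i$j) = poly a t"
     "\<forall>t. q (\<chi> i j. X$i$j + t * Y$i$j) = poly b t" by blast
  then show ?case by (intro exI[of _ "a * b"]) simp
qed

lemma poly_inf_zero:
  fixes q :: "complex poly"
  assumes "\<And>t. t \<in> T \<Longrightarrow> poly q (of_real t) = 0" "infinite T"
  shows "q = 0"
proof (rule ccontr)
  assume "q \<noteq> 0"
  then have "finite {x. poly q x = 0}" by (rule poly_roots_finite)
  moreover have "of_real ` T \<subseteq> {x. poly q x = 0}" using assms(1) by auto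
  ultimately have "finite (of_real ` T :: complex set)" by (rule finite_subset[rotated])
  moreover have "inj_on (of_real :: real \<Rightarrow> complex) T" by (simp add: inj_on_def)
  ultimately show False using assms(2) finite_imageD by blast
qed

lemma cmat_line:
  "cmat (P + t *\<^sub>R D) = (\<chi> i j. cmat P $i$j + complex_of_real t * cmat D $i$j)"
  by (simp add: cmat_def vec_eq_iff)

lemma vanish_open:
  fixes P :: "real^'n^'n"
  assumes pf: "poly_fun p" and U: "open U" "P \<in> U" and Ps: "transpose P = P"
    and van: "\<forall>S\<in>U. transpose S = S \<longrightarrow> p (cmat S) = 0"
  shows "\<forall>A\<in>symC. p A = 0"
proof -
  obtain e where e: "e > 0" "ball P e \<subseteq> U" using U openE by blast
  have step1: "p (cmat (P + D)) = 0" if Ds: "transpose D = D" for D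
  proof -
    obtain q where q: "\<forall>t. p (\<chi> i j. cmat P$i$j + t * cmat D$i$j) = poly q t"
      using poly_fun_line[OF pf] by blast
    define d where "d = e / (norm D + 1)"
    have "norm D + 1 > 0" by (smt (verit) norm_ge_zero)
    then have d: "d > 0" using e by (simp add: d_def)
    have "q = 0"
    proof (rule poly_inf_zero[of "{0<..<d}"])
      fix t assume t: "t \<in> {0<..<d}"
      have "norm (t *\<^sub>R D) = t * norm D" using t by simp
      also have "\<dots> \<le> d * norm D" using t by (intro mult_right_mono) auto
      also have "\<dots> = e * norm D / (norm D + 1)" by (simp add: d_def)
      also have "\<dots> < e" using e \<open>norm D + 1 > 0\<close> by (simp add: divide_less_eq algebra_simps)
      finally have "P + t *\<^sub>R D \<in> ball P e" by (simp add: dist_norm)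
      then have "P + t *\<^sub>R D \<in> U" using e by blast
      moreover have "transpose (P + t *\<^sub>R D) = P + t *\<^sub>R D"
        using Ps Ds by (simp add: transpose_def vec_eq_iff)
      ultimately have "p (cmat (P + t *\<^sub>R D)) = 0" using van by blast
      then show "poly q (of_real t) = 0" using q by (simp add: cmat_line)
    qed (use d in auto)
    then have "poly q 1 = 0" by simp
    then have "p (\<chi> i j. cmat P$i$j + 1 * cmat D$i$j) = 0" using q by metis
    then show ?thesis using cmat_line[of P 1 D] by simp
  qed
  have allr: "p (cmat R) = 0" if "transpose R = R" for R
    using step1[of "R - P"] that Ps by (simp add: transpose_def vec_eq_iff)
  show ?thesis
  proof
    fix A :: "complex^'n^'n" assume "A \<in> symC"
    then have As: "transpose A = A" by (simp add: symC_def)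
    define B :: "real^'n^'n" where "B = (\<chi> i j. Re (A$i$j))"
    define C :: "real^'n^'n" where "C = (\<chi> i j. Im (A$i$j))"
    obtain q where q: "\<forall>t. p (\<chi> i j. cmat B$i$j + t * cmat C$i$j) = poly q t"
      using poly_fun_line[OF pf] by blast
    have sB: "transpose B = B" using As unfolding B_def
      by (simp add: transpose_def vec_eq_iff)
    have sC: "transpose C = C" using As unfolding C_def
      by (simp add: transpose_def vec_eq_iff)
    have "q = 0"
    proof (rule poly_inf_zero[of UNIV])
      fix t :: real
      have "transpose (B + t *\<^sub>R C) = B + t *\<^sub>R C"
        using sB sC by (simp add: transpose_def vec_eq_iff)
      then have "p (cmat (B + t *\<^sub>R C)) = 0" by (rule allr)
      then show "poly q (of_real t) = 0" using q by (simp add: cmat_line)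
    qed (rule infinite_UNIV_char_0)
    then have "p (\<chi> i j. cmat B$i$j + \<i> * cmat C$i$j) = 0" using q by simp
    moreover have "(\<chi> i j. cmat B$i$j + \<i> * cmat C$i$j) = A"
      by (simp add: vec_eq_iff cmat_def B_def C_def complex_eq_iff)
    ultimately show "p A = 0" by simp
  qed
qed


lemma inv_props:
  fixes K :: "'a::field^'n^'n"
  assumes "invertible K"
  shows "K ** matrix_inv K = mat 1" "matrix_inv K ** K = mat 1"
proof -
  have "\<exists>A'. K ** A' = mat 1 \<and> A' ** K = mat 1" using assms by (simp add: invertible_def)
  then have "K ** matrix_inv K = mat 1 \<and> matrix_inv K ** K = mat 1"
    unfolding matrix_inv_def by (rule someI_ex)
  then show "K ** matrix_inv K = mat 1" "matrix_inv K ** K = mat 1" by auto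
qed

lemma inv_unique:
  fixes A B :: "'a::field^'n^'n"
  assumes "A ** B = mat 1"
  shows "matrix_inv A = B" "invertible A"
proof -
  have BA: "B ** A = mat 1" using assms matrix_left_right_inverse by blast
  then show inv: "invertible A" using assms invertible_def by blast
  have "matrix_inv A = matrix_inv A ** (A ** B)" using assms by simp
  also have "\<dots> = (matrix_inv A ** A) ** B" by (simp add: matrix_mul_assoc)
  also have "\<dots> = B" using inv_props[OF inv] by simp
  finally show "matrix_inv A = B" .
qed

lemma cmat_mult: "cmat (A ** B) = cmat A ** cmat B"
  by (simp add: cmat_def matrix_matrix_mult_def vec_eq_iff)

lemma cmat_one: "cmat (mat 1) = mat 1"
  by (simp add: cmat_def mat_def vec_eq_iff)

lemma cmat_diff: "cmat (A - B) = cmat A - cmat B"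
  by (simp add: cmat_def vec_eq_iff)

lemma cmat_transpose: "cmat (transpose A) = transpose (cmat A)"
  by (simp add: cmat_def transpose_def vec_eq_iff)

lemma inv_sym:
  fixes K :: "real^'n^'n"
  assumes "invertible K" "transpose K = K"
  shows "transpose (matrix_inv K) = matrix_inv K"
proof -
  have "transpose (matrix_inv K) ** K = transpose (matrix_inv K) ** transpose K"
    using assms(2) by simp
  also have "\<dots> = transpose (K ** matrix_inv K)" by (simp add: matrix_transpose_mul)
  also have "\<dots> = mat 1" using inv_props[OF assms(1)] by (simp add: transpose_mat)
  finally have "transpose (matrix_inv K) ** K = mat 1" .
  then have "K ** transpose (matrix_inv K) = mat 1" using matrix_left_right_inverse by blast
  then show ?thesis using inv_unique by metis
qed

lemma inner_mat: "(A::real^'n^'n) \<bullet> B = (\<Sum>i\<in>UNIV. \<Sum>j\<in>UNIV. A$i$j * B$i$j)"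
  by (simp add: inner_vec_def)

lemma trace_sym_inner:
  fixes K R :: "real^'n^'n"
  assumes "transpose K = K"
  shows "(\<Sum>i\<in>UNIV. \<Sum>j\<in>UNIV. K$i$j * R$j$i) = K \<bullet> R"
proof -
  have "(\<Sum>i\<in>UNIV. \<Sum>j\<in>UNIV. K$i$j * R$j$i) = (\<Sum>i\<in>UNIV. \<Sum>j\<in>UNIV. K$j$i * R$j$i)"
  proof -
    have kij: "K$j$i = K$i$j" for i j
    proof -
      have "transpose K $ i $ j = K $ i $ j" using assms by simp
      then show ?thesis by (simp add: transpose_def)
    qed
    show ?thesis by (intro sum.cong refl) (simp add: kij)
  qed
  also have "\<dots> = (\<Sum>j\<in>UNIV. \<Sum>i\<in>UNIV. K$j$i * R$j$i)" by (rule sum.swap)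
  also have "\<dots> = K \<bullet> R" by (simp add: inner_mat)
  finally show ?thesis .
qed

lemma trace_cspan:
  fixes L :: "(real^'n^'n) set"
  assumes sym: "\<forall>K\<in>L. transpose K = K" and A: "A \<in> cspan L"
    and orth: "\<forall>y\<in>L. y \<bullet> R = 0"
  shows "trace (A ** cmat R) = 0"
proof -
  obtain F c where F: "finite F" "F \<subseteq> L"
    and Aeq: "A = (\<Sum>K\<in>F. (\<chi> i j. c K * (cmat K) $ i $ j))"
    using A unfolding cspan_def by blast
  have Aij: "A$i$j = (\<Sum>K\<in>F. c K * complex_of_real (K$i$j))" for i j
    by (simp add: Aeq sum_component cmat_def)
  have "trace (A ** cmat R) = (\<Sum>i\<in>UNIV. \<Sum>j\<in>UNIV. A$i$j * complex_of_real (R$j$i))"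
    by (simp add: trace_def matrix_matrix_mult_def cmat_def)
  also have "\<dots> = (\<Sum>i\<in>UNIV. \<Sum>j\<in>UNIV. \<Sum>K\<in>F. c K * complex_of_real (K$i$j * R$j$i))"
    by (simp add: Aij sum_distrib_right mult.assoc)
  also have "\<dots> = (\<Sum>K\<in>F. c K * complex_of_real (\<Sum>i\<in>UNIV. \<Sum>j\<in>UNIV. K$i$j * R$j$i))"
    by (simp add: sum_distrib_left sum.swap[of _ UNIV F] sum.swap[of _ UNIV F])
  also have "\<dots> = 0"
  proof (rule sum.neutral, rule ballI)
    fix K assume "K \<in> F"
    then have "K \<in> L" using F by blast
    then have "(\<Sum>i\<in>UNIV. \<Sum>j\<in>UNIV. K$i$j * R$j$i) = 0"
      using trace_sym_inner[of K R] sym orth by simp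
    then show "c K * complex_of_real (\<Sum>i\<in>UNIV. \<Sum>j\<in>UNIV. K$i$j * R$j$i) = 0" by simp
  qed
  finally show ?thesis .
qed

lemma complex_part:
  fixes L :: "(real^'n^'n) set"
  assumes sym: "\<forall>K\<in>L. transpose K = K" and KL: "K \<in> L" and Kinv: "invertible K"
    and Ss: "transpose S = S" and orth: "\<forall>y\<in>L. y \<bullet> (S - matrix_inv K) = 0"
  shows "cmat (matrix_inv K) \<in> reciprocal (cspan L) \<inter> {Sig + cmat S | Sig. Sig \<in> perpC (cspan L)}"
proof
  have "cmat K ** cmat (matrix_inv K) = mat 1"
    by (simp add: cmat_mult[symmetric] inv_props[OF Kinv] cmat_one)
  then have ci: "matrix_inv (cmat K) = cmat (matrix_inv K)" "invertible (cmat K)"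
    using inv_unique by blast+
  have "cmat K \<in> cspan L" unfolding cspan_def
    by (rule CollectI, rule exI[of _ "{K}"], rule exI[of _ "\<lambda>_. 1"]) (simp add: KL vec_eq_iff)
  then have "cmat (matrix_inv K) \<in> {matrix_inv A | A. A \<in> cspan L \<and> invertible A}"
    using ci by force
  then show "cmat (matrix_inv K) \<in> reciprocal (cspan L)"
    unfolding reciprocal_def zariski_closure_def by blast
next
  define R where "R = matrix_inv K - S"
  have Rs: "transpose R = R" using inv_sym[OF Kinv] sym KL Ss
    by (simp add: R_def transpose_def vec_eq_iff)
  have oR: "\<forall>y\<in>L. y \<bullet> R = 0" using orth by (simp add: R_def inner_diff_right)
  have "cmat R \<in> perpC (cspan L)"
    unfolding perpC_def symC_def
    using Rs trace_cspan[OF sym _ oR] by (simp add: cmat_transpose[symmetric])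
  moreover have "cmat (matrix_inv K) = cmat R + cmat S" by (simp add: R_def cmat_def vec_eq_iff)
  ultimately show "cmat (matrix_inv K) \<in> {Sig + cmat S | Sig. Sig \<in> perpC (cspan L)}" by blast
qed


lemma sym_swap:
  fixes Q :: "real^'n^'n"
  assumes "transpose Q = Q"
  shows "u \<bullet> (Q *v v) = v \<bullet> (Q *v u)"
proof -
  have "u \<bullet> (Q *v v) = (u v* Q) \<bullet> v" by (simp add: dot_lmul_matrix)
  also have "u v* Q = Q *v u" using vector_transpose_matrix[of u Q] assms by simp
  finally show ?thesis by (simp add: inner_commute)
qed

lemma quad_add:
  fixes Q :: "real^'n^'n"
  assumes "transpose Q = Q"
  shows "(u + v) \<bullet> (Q *v (u + v)) = u \<bullet> (Q *v u) + 2 * (u \<bullet> (Q *v v)) + v \<bullet> (Q *v v)"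
  using sym_swap[OF assms, of v u]
  by (simp add: matrix_vector_right_distrib inner_add_left inner_add_right)

lemma quad_scale:
  fixes Q :: "real^'n^'n"
  shows "(c *\<^sub>R u) \<bullet> (Q *v v) = c * (u \<bullet> (Q *v v))"
    "u \<bullet> (Q *v (c *\<^sub>R v)) = c * (u \<bullet> (Q *v v))"
  by (simp_all add: matrix_vector_mult_scaleR)

lemma axis_Q: "axis a 1 \<bullet> (Q *v x) = Q$a \<bullet> (x::real^'n)"
  by (simp add: inner_axis' matrix_vector_mul_component)

lemma Q_axis: "(Q *v axis j (1::real)) $ i = Q$i$j"
  by (simp add: matrix_vector_mul_component inner_axis)

lemma psd_decomp:
  fixes Q :: "real^'n^'n"
  assumes "finite I" "transpose Q = Q" "\<forall>x. x \<bullet> (Q *v x) \<ge> 0"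
    "\<forall>i j. i \<notin> I \<longrightarrow> Q$i$j = 0"
  shows "\<exists>w. \<forall>i j. Q$i$j = (\<Sum>a\<in>I. w a $ i * w a $ j)"
  using assms
proof (induction I arbitrary: Q rule: finite_induct)
  case empty
  then show ?case by simp
next
  case (insert a I)
  have qs: "Q$i$j = Q$j$i" for i j
  proof -
    have "transpose Q $ j $ i = Q $ j $ i" using insert.prems(1) by simp
    then show ?thesis by (simp add: transpose_def)
  qed
  have Qaa: "Q$a$a \<ge> 0" using insert.prems(2)[rule_format, of "axis a 1"]
    by (simp add: axis_Q inner_axis)
  show ?case
  proof (cases "Q$a$a = 0")
    case True
    have rowa: "Q$a$j = 0" for j
    proof (rule ccontr)
      assume nz: "Q$a$j \<noteq> 0"
      define t where "t = - (Q$j$j + 1) / (2 * Q$a$j)"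
      have "0 \<le> (t *\<^sub>R axis a 1 + axis j 1) \<bullet> (Q *v (t *\<^sub>R axis a 1 + axis j 1))"
        using insert.prems(2) by blast
      also have "\<dots> = t * t * Q$a$a + 2 * (t * Q$a$j) + Q$j$j"
        by (simp add: quad_add[OF insert.prems(1)] quad_scale axis_Q inner_axis)
      also have "\<dots> = -1" using True nz by (simp add: t_def field_simps)
      finally show False by simp
    qed
    have "\<forall>i j. i \<notin> I \<longrightarrow> Q$i$j = 0"
    proof (intro allI impI)
      fix i j assume "i \<notin> I"
      then show "Q$i$j = 0" by (cases "i = a") (use insert.prems(3) rowa in auto)
    qed
    then obtain w :: "'n \<Rightarrow> real^'n" where w: "\<forall>i j. Q$i$j = (\<Sum>b\<in>I. w b $ i * w b $ j)"
      using insert.IH insert.prems(1,2) by blast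
    show ?thesis
      by (rule exI[of _ "w(a := 0)"]) (use insert.hyps w in \<open>auto simp add: rowa intro!: sum.cong\<close>)
  next
    case False
    then have pos: "Q$a$a > 0" using Qaa by simp
    define Q' where "Q' = (\<chi> i j. Q$i$j - Q$a$i * Q$a$j / Q$a$a)"
    have Q'ij: "Q'$i$j = Q$i$j - Q$a$i * Q$a$j / Q$a$a" for i j by (simp add: Q'_def)
    have sQ': "transpose Q' = Q'"
      by (simp add: vec_eq_iff transpose_def Q'ij qs mult.commute)
    have Mx: "x \<bullet> (Q' *v x) = x \<bullet> (Q *v x) - (Q$a \<bullet> x) * (Q$a \<bullet> x) / Q$a$a" for x
    proof -
      have "Q' *v x = Q *v x - ((Q$a \<bullet> x) / Q$a$a) *\<^sub>R Q$a"
        by (simp add: vec_eq_iff matrix_vector_mult_def Q'ij inner_vec_def sum_subtractf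
            sum_distrib_left sum_divide_distrib algebra_simps)
      then show ?thesis by (simp add: inner_diff_right inner_commute)
    qed
    have psd': "x \<bullet> (Q' *v x) \<ge> 0" for x
    proof -
      define s where "s = Q$a \<bullet> x"
      define c where "c = s / Q$a$a"
      have "0 \<le> (x + (-c) *\<^sub>R axis a 1) \<bullet> (Q *v (x + (-c) *\<^sub>R axis a 1))"
        using insert.prems(2) by blast
      also have "\<dots> = x \<bullet> (Q *v x) + 2 * (- c * s) + c * c * Q$a$a"
        using sym_swap[OF insert.prems(1), of x "axis a 1"]
        unfolding quad_add[OF insert.prems(1)] quad_scale
        by (simp add: axis_Q inner_axis s_def)
      also have "\<dots> = x \<bullet> (Q' *v x)" using pos
        by (simp add: Mx c_def s_def field_simps power2_eq_square)
      finally show ?thesis .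
    qed
    have supp': "\<forall>i j. i \<notin> I \<longrightarrow> Q'$i$j = 0"
    proof (intro allI impI)
      fix i j assume i: "i \<notin> I"
      show "Q'$i$j = 0"
      proof (cases "i = a")
        case True then show ?thesis using pos by (simp add: Q'ij)
      next
        case False
        then have "Q$i$j = 0" "Q$a$i = 0" using i insert.prems(3) qs by auto
        then show ?thesis by (simp add: Q'ij)
      qed
    qed
    obtain w where w: "\<forall>i j. Q'$i$j = (\<Sum>b\<in>I. w b $ i * w b $ j)"
      using insert.IH[OF sQ'] psd' supp' by blast
    define w' where "w' = w(a := (1 / sqrt (Q$a$a)) *\<^sub>R Q$a)"
    have "Q$i$j = (\<Sum>b\<in>insert a I. w' b $ i * w' b $ j)" for i j
    proof -
      have "(\<Sum>b\<in>insert a I. w' b $ i * w' b $ j) = w' a $ i * w' a $ j + (\<Sum>b\<in>I. w b $ i * w b $ j)"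
        using insert.hyps by (auto simp add: w'_def intro!: sum.cong)
      also have "w' a $ i * w' a $ j = Q$a$i * Q$a$j / Q$a$a"
        using pos by (simp add: w'_def field_simps real_sqrt_mult[symmetric])
      finally have "(\<Sum>b\<in>insert a I. w' b $ i * w' b $ j) = Q$a$i * Q$a$j / Q$a$a + Q'$i$j"
        using w by simp
      then show ?thesis by (simp add: Q'ij)
    qed
    then show ?thesis by blast
  qed
qed

lemma inner_trace: "(A::real^'n^'n) \<bullet> B = trace (transpose A ** B)"
  by (simp add: inner_vec_def trace_def matrix_matrix_mult_def transpose_def) (rule sum.swap)

lemma pd_pos:
  fixes P h :: "real^'n^'n"
  assumes Ps: "transpose P = P" and Ppd: "\<forall>x. x \<noteq> 0 \<longrightarrow> x \<bullet> (P *v x) > 0"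
    and hs: "transpose h = h" and z: "h \<bullet> (P ** h ** P) = 0"
  shows "h = 0"
proof -
  define Q where "Q = h ** P ** h"
  have Qs: "transpose Q = Q" using Ps hs by (simp add: Q_def matrix_transpose_mul matrix_mul_assoc)
  have Qx: "x \<bullet> (Q *v x) = (h *v x) \<bullet> (P *v (h *v x))" for x
  proof -
    have "Q *v x = h *v (P *v (h *v x))" by (simp add: Q_def matrix_vector_mul_assoc matrix_mul_assoc)
    then show ?thesis using sym_swap[OF hs, of x "P *v (h *v x)"] by (simp add: inner_commute)
  qed
  have Pnn: "x \<bullet> (P *v x) \<ge> 0" for x using Ppd by (cases "x = 0") (auto intro: less_imp_le)
  have "\<forall>x. x \<bullet> (Q *v x) \<ge> 0" using Qx Pnn by simp
  then have "\<exists>w. \<forall>i j. Q$i$j = (\<Sum>a\<in>(UNIV::'n set). w a $ i * w a $ j)"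
    using psd_decomp[of "UNIV::'n set" Q] Qs by simp
  then obtain w :: "'n \<Rightarrow> real^'n" where w: "\<forall>i j. Q$i$j = (\<Sum>a\<in>UNIV. w a $ i * w a $ j)"
    by blast
  have "h \<bullet> (P ** h ** P) = trace (h ** (P ** h ** P))" using hs by (simp add: inner_trace)
  also have "\<dots> = trace ((h ** P ** h) ** P)" by (simp add: matrix_mul_assoc)
  also have "\<dots> = trace (P ** (h ** P ** h))" by (rule trace_mul_sym)
  also have "\<dots> = trace (P ** Q)" by (simp add: Q_def)
  also have "\<dots> = (\<Sum>i\<in>UNIV. \<Sum>j\<in>UNIV. P$i$j * Q$j$i)"
    by (simp add: trace_def matrix_matrix_mult_def)
  also have "\<dots> = (\<Sum>i\<in>UNIV. \<Sum>j\<in>UNIV. \<Sum>a\<in>UNIV. w a $ i * P$i$j * w a $ j)"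
    by (simp add: w sum_distrib_left mult.commute mult.left_commute)
  also have "\<dots> = (\<Sum>i\<in>UNIV. \<Sum>a\<in>UNIV. \<Sum>j\<in>UNIV. w a $ i * P$i$j * w a $ j)"
    by (rule sum.cong[OF refl], rule sum.swap)
  also have "\<dots> = (\<Sum>a\<in>UNIV. \<Sum>i\<in>UNIV. \<Sum>j\<in>UNIV. w a $ i * P$i$j * w a $ j)"
    by (rule sum.swap)
  also have "\<dots> = (\<Sum>a\<in>UNIV. w a \<bullet> (P *v w a))"
    by (simp add: inner_vec_def matrix_vector_mult_def sum_distrib_left mult.assoc)
  finally have s0: "(\<Sum>a\<in>UNIV. w a \<bullet> (P *v w a)) = 0" using z by simp
  have "\<forall>a\<in>UNIV. w a \<bullet> (P *v w a) = 0"
    using sum_nonneg_eq_0_iff[of UNIV "\<lambda>a. w a \<bullet> (P *v w a)"] s0 Pnn by simp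
  then have "w a = 0" for a using Ppd[rule_format, of "w a"] by (cases "w a = 0") auto
  then have Q0: "Q = 0" using w by (simp add: vec_eq_iff)
  have "h *v x = 0" for x
  proof -
    have "(h *v x) \<bullet> (P *v (h *v x)) = 0" using Qx[of x] Q0 by simp
    then show ?thesis using Ppd[rule_format, of "h *v x"] by (cases "h *v x = 0") auto
  qed
  then show ?thesis by (simp add: matrix_eq)
qed


lemma proj_exists:
  fixes L :: "'a::euclidean_space set"
  assumes "subspace L"
  shows "\<exists>pr. linear pr \<and> (\<forall>x. pr x \<in> L) \<and> (\<forall>x. \<forall>y\<in>L. y \<bullet> (x - pr x) = 0)"
proof -
  obtain B where "B \<subseteq> L"
    and ortho: "pairwise orthogonal B" "\<And>x. x \<in> B \<Longrightarrow> norm x = 1"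
    and "independent B" "card B = dim L" "span B = L"
    using orthonormal_basis_subspace [OF assms] by metis
  then have fB: "finite B"
    by (simp add: indep_card_eq_dim_span)
  have *: "\<forall>x\<in>B. \<forall>y\<in>B. x \<bullet> y = (if x=y then 1 else 0)"
    using ortho norm_eq_1 by (auto simp: orthogonal_def pairwise_def)
  define pr where "pr v = (\<Sum>b\<in>B. (v \<bullet> b) *\<^sub>R b)" for v
  have lin: "linear pr"
    by (rule linearI) (simp_all add: pr_def inner_add_left scaleR_add_left sum.distrib
        scaleR_sum_right)
  have inL: "pr v \<in> L" for v
    unfolding pr_def
    by (metis (no_types, lifting) \<open>span B = L\<close> assms subspace_sum span_base span_mul)
  have orth: "\<forall>y\<in>L. y \<bullet> (v - pr v) = 0" for v
  proof
    fix y
    assume "y \<in> L"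
    with \<open>span B = L\<close> span_finite [OF fB]
    obtain u where u: "y = (\<Sum>b\<in>B. u b *\<^sub>R b)"
      by auto
    have "b \<bullet> (v - pr v) = 0" if "b \<in> B" for b
      using that fB unfolding pr_def
      by (simp add: * algebra_simps inner_sum_right if_distrib [of "(*)v" for v] inner_commute cong: if_cong)
    then show "y \<bullet> (v - pr v) = 0"
      by (simp add: u inner_sum_left)
  qed
  show ?thesis using lin inL orth by blast
qed

lemma mat_lin1: "linear (\<lambda>B. (A::real^'n^'n) ** B)"
  by (rule linearI) (simp_all add: vec_eq_iff matrix_matrix_mult_def sum.distrib
        algebra_simps scaleR_sum_right sum_distrib_left)

lemma mat_lin2: "linear (\<lambda>A. (A::real^'n^'n) ** B)"
  by (rule linearI) (simp_all add: vec_eq_iff matrix_matrix_mult_def sum.distrib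
        algebra_simps scaleR_sum_right sum_distrib_left)

lemma mat_bilinear: "bilinear (\<lambda>(A::real^'n^'n) B. A ** B)"
  unfolding bilinear_def using mat_lin1 mat_lin2 by auto

lemma mat_bbil: "bounded_bilinear (\<lambda>(A::real^'n^'n) B. A ** B)"
  using mat_bilinear bilinear_conv_bounded_bilinear by blast

lemma pd_invertible:
  fixes K :: "real^'n^'n"
  assumes "pos_def K"
  shows "invertible K"
proof -
  have "\<forall>x. K *v x = 0 \<longrightarrow> x = 0"
    using assms unfolding pos_def_def by (metis inner_zero_right less_irrefl)
  then show ?thesis using matrix_left_invertible_ker invertible_left_inverse by blast
qed

lemma pd_inv:
  fixes K :: "real^'n^'n"
  assumes "pos_def K"
  shows "transpose (matrix_inv K) = matrix_inv K"
    "\<forall>x. x \<noteq> 0 \<longrightarrow> x \<bullet> (matrix_inv K *v x) > 0"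
proof -
  have inv: "invertible K" using pd_invertible[OF assms] .
  have Ks: "transpose K = K" using assms by (simp add: pos_def_def)
  show "transpose (matrix_inv K) = matrix_inv K" using inv_sym[OF inv Ks] .
  show "\<forall>x. x \<noteq> 0 \<longrightarrow> x \<bullet> (matrix_inv K *v x) > 0"
  proof (intro allI impI)
    fix x :: "real^'n" assume x: "x \<noteq> 0"
    define y where "y = matrix_inv K *v x"
    have Ky: "K *v y = x" using inv_props[OF inv] by (simp add: y_def matrix_vector_mul_assoc)
    then have "y \<noteq> 0" using x by auto
    then have "y \<bullet> (K *v y) > 0" using assms by (simp add: pos_def_def)
    moreover have "x \<bullet> (matrix_inv K *v x) = y \<bullet> (K *v y)"
      using Ky by (simp add: y_def inner_commute)
    ultimately show "x \<bullet> (matrix_inv K *v x) > 0" by simp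
  qed
qed



lemma open_part:
  fixes L :: "(real^'n^'n) set" and K0 :: "real^'n^'n"
  assumes sub: "subspace L" and sym: "\<forall>K\<in>L. transpose K = K" and K0L: "K0 \<in> L"
    and pd: "pos_def K0"
  shows "\<exists>U. open U \<and> matrix_inv K0 \<in> U \<and>
           (\<forall>S\<in>U. \<exists>K\<in>L. invertible K \<and> (\<forall>y\<in>L. y \<bullet> (S - matrix_inv K) = 0))"
proof -
  obtain pr where lin: "linear pr" and inL: "\<forall>x. pr x \<in> L"
    and orth: "\<forall>x. \<forall>y\<in>L. y \<bullet> (x - pr x) = 0"
    using proj_exists[OF sub] by blast
  have prid: "pr x = x" if "x \<in> L" for x
  proof -
    have "x - pr x \<in> L" using sub that inL subspace_diff by blast
    then have "(x - pr x) \<bullet> (x - pr x) = 0" using orth by blast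
    then show ?thesis by simp
  qed
  have prpr: "pr (pr x) = pr x" for x using prid inL by blast
  have pr0: "\<forall>y\<in>L. y \<bullet> x = 0" if px: "pr x = 0" for x
  proof
    fix y assume "y \<in> L"
    then have "y \<bullet> (x - pr x) = 0" using orth by blast
    then show "y \<bullet> x = 0" using px by simp
  qed
  have perp_in: "v = 0" if "v \<in> L" "\<forall>y\<in>L. y \<bullet> v = 0" for v
    using that by auto
  have blpr: "bounded_linear pr" using lin linear_conv_bounded_linear by blast
  define P where "P = matrix_inv K0"
  have K0inv: "invertible K0" using pd_invertible[OF pd] .
  have Ps: "transpose P = P" and Ppd: "\<forall>x. x \<noteq> 0 \<longrightarrow> x \<bullet> (P *v x) > 0"
    using pd_inv[OF pd] by (simp_all add: P_def)
  have PK: "P ** K0 = mat 1" "K0 ** P = mat 1" using inv_props[OF K0inv] by (simp_all add: P_def)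
  define \<Phi> where "\<Phi> = (\<lambda>x::(real^'n^'n) \<times> (real^'n^'n).
      (snd x ** pr (fst x), pr (snd x) + fst x - pr (fst x)))"
  define D where "D = (\<lambda>(x0::(real^'n^'n) \<times> (real^'n^'n)) h.
      (snd x0 ** pr (fst h) + snd h ** pr (fst x0), pr (snd h) + fst h - pr (fst h)))"
  have bl1: "bounded_linear (\<lambda>x::(real^'n^'n) \<times> (real^'n^'n). pr (fst x))"
    using bounded_linear_compose[OF blpr bounded_linear_fst] by (simp add: o_def)
  have bl2: "bounded_linear (\<lambda>x::(real^'n^'n) \<times> (real^'n^'n). snd x)"
    by (rule bounded_linear_snd)
  have lin3: "linear (\<lambda>x::(real^'n^'n) \<times> (real^'n^'n). pr (snd x) + fst x - pr (fst x))"
    by (rule linearI) (simp_all add: linear_add[OF lin] linear_scale[OF lin] algebra_simps)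
  have bl3: "bounded_linear (\<lambda>x::(real^'n^'n) \<times> (real^'n^'n). pr (snd x) + fst x - pr (fst x))"
    using lin3 linear_conv_bounded_linear by blast
  have der: "(\<Phi> has_derivative D x) (at x)" for x
  proof -
    have d1: "((\<lambda>x. snd x ** pr (fst x)) has_derivative
        (\<lambda>h. snd x ** pr (fst h) + snd h ** pr (fst x))) (at x)"
      using bounded_bilinear.FDERIV[OF mat_bbil, of snd snd x UNIV "\<lambda>x. pr (fst x)" "\<lambda>h. pr (fst h)"]
        bounded_linear_imp_has_derivative[OF bl1] bounded_linear_imp_has_derivative[OF bl2]
      by simp
    have d2: "((\<lambda>x. pr (snd x) + fst x - pr (fst x)) has_derivative
        (\<lambda>h. pr (snd h) + fst h - pr (fst h))) (at x)"
      by (rule bounded_linear_imp_has_derivative[OF bl3])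
    show ?thesis unfolding \<Phi>_def D_def using has_derivative_Pair[OF d1 d2] by simp
  qed
  have cont: "continuous_on UNIV \<Phi>"
    using der has_derivative_continuous continuous_at_imp_continuous_on by blast
  define x0 where "x0 = (K0, P)"
  have prK0: "pr K0 = K0" using prid K0L by blast
  have blD: "bounded_linear (D x0)" using der has_derivative_bounded_linear by blast
  then have linD: "linear (D x0)" using linear_conv_bounded_linear by blast
  have injD: "inj (D x0)"
    unfolding linear_injective_0[OF linD]
  proof (intro allI impI)
    fix h :: "(real^'n^'n) \<times> (real^'n^'n)"
    assume h0: "D x0 h = 0"
    obtain a \<sigma> where h: "h = (a, \<sigma>)" by (cases h)
    have c1: "P ** pr a + \<sigma> ** K0 = 0" and c2: "pr \<sigma> + a - pr a = 0"
      using h0 by (simp_all add: D_def x0_def h prK0 zero_prod_def)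
    have "pr (pr \<sigma> + a - pr a) = pr \<sigma>"
      by (simp add: linear_add[OF lin] linear_diff[OF lin] prpr)
    then have prs: "pr \<sigma> = 0" using c2 linear_0[OF lin] by simp
    then have aa: "pr a = a" using c2 by simp
    then have aL: "a \<in> L" using inL by metis
    have "\<sigma> = \<sigma> ** (K0 ** P)" using PK by simp
    also have "\<dots> = (\<sigma> ** K0) ** P" by (simp add: matrix_mul_assoc)
    also have "\<sigma> ** K0 = - (P ** a)" using c1 aa by (simp add: eq_neg_iff_add_eq_0 add.commute)
    finally have s0: "\<sigma> = (- (P ** a)) ** P" .
    have s: "\<sigma> = - (P ** a ** P)"
      using s0 linear_neg[OF mat_lin2[of P], of "P ** a"] by simp
    have "a \<bullet> \<sigma> = 0" using pr0[OF prs] aL by blast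
    then have "a \<bullet> (P ** a ** P) = 0" using s by simp
    then have "a = 0" using pd_pos[OF Ps Ppd] sym aL by blast
    then have "\<sigma> = 0" using s by simp
    then show "h = 0" using \<open>a = 0\<close> h by (simp add: zero_prod_def)
  qed
  have surjD: "surj (D x0)" using linear_injective_imp_surjective[OF linD injD] by simp
  obtain g where lg: "linear g" and Dg: "D x0 \<circ> g = id"
    using linear_surjective_right_inverse[OF linD surjD] by blast
  have blg: "bounded_linear g" using lg linear_conv_bounded_linear by blast
  have "\<Phi> x0 \<in> interior (\<Phi> ` UNIV)"
    by (rule sussmann_open_mapping[OF open_UNIV cont _ der blg Dg]) auto
  moreover have "\<Phi> x0 = (mat 1, pr P)" using PK prK0 by (simp add: \<Phi>_def x0_def)
  ultimately have inP: "(mat 1, pr P) \<in> interior (range \<Phi>)" by simp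
  define U where "U = (\<lambda>S. (mat 1 :: real^'n^'n, pr S)) -` interior (range \<Phi>)"
  have "continuous_on UNIV (\<lambda>S. (mat 1 :: real^'n^'n, pr S))"
    by (intro continuous_on_Pair continuous_on_const linear_continuous_on[OF blpr])
  then have oU: "open U" unfolding U_def by (intro open_vimage open_interior)
  have PU: "matrix_inv K0 \<in> U" using inP by (simp add: U_def P_def)
  have good: "\<exists>K\<in>L. invertible K \<and> (\<forall>y\<in>L. y \<bullet> (S - matrix_inv K) = 0)" if S: "S \<in> U" for S
  proof -
    have "(mat 1, pr S) \<in> range \<Phi>" using S interior_subset unfolding U_def by blast
    then obtain A \<Sigma> where eq: "(mat 1, pr S) = \<Phi> (A, \<Sigma>)" by (metis rangeE surj_pair)
    then have e1: "\<Sigma> ** pr A = mat 1" and e2: "pr S = pr \<Sigma> + A - pr A"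
      by (simp_all add: \<Phi>_def)
    define K where "K = pr A"
    have KL: "K \<in> L" using inL K_def by simp
    have "K ** \<Sigma> = mat 1" using e1 matrix_left_right_inverse K_def by blast
    then have Kinv: "invertible K" and KS: "matrix_inv K = \<Sigma>" using inv_unique by blast+
    define v where "v = A - pr A"
    have "v = pr S - pr \<Sigma>" using e2 by (simp add: v_def)
    then have "v \<in> L" using inL sub subspace_diff by metis
    moreover have "\<forall>y\<in>L. y \<bullet> v = 0" using orth v_def by blast
    ultimately have "v = 0" using perp_in by blast
    then have "pr (S - \<Sigma>) = 0" using e2 by (simp add: v_def linear_diff[OF lin])
    then have "\<forall>y\<in>L. y \<bullet> (S - matrix_inv K) = 0" using pr0 KS by blast
    then show ?thesis using KL Kinv by blast
  qed
  show ?thesis using oU PU good by blast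
qed


theorem corollary6p2:
  fixes L :: "(real^'n^'n) set"
  assumes "subspace L"
    and "\<forall>K\<in>L. transpose K = K"
    and "regular L"
    and "has_ml_degree L 0"
  shows "\<not> (\<exists>K\<in>L. pos_def K)"
proof
  assume "\<exists>K\<in>L. pos_def K"
  then obtain K0 where K0L: "K0 \<in> L" and pd: "pos_def K0" by blast
  obtain U where oU: "open U" and PU: "matrix_inv K0 \<in> U"
    and good: "\<forall>S\<in>U. \<exists>K\<in>L. invertible K \<and> (\<forall>y\<in>L. y \<bullet> (S - matrix_inv K) = 0)"
    using open_part[OF assms(1) assms(2) K0L pd] by blast
  obtain p where pf: "poly_fun p" and ex: "\<exists>S\<in>symC. p S \<noteq> 0"
    and gen: "\<forall>S\<in>symC. p S \<noteq> 0 \<longrightarrow>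
           (let X = reciprocal (cspan L) \<inter> {Sig + S | Sig. Sig \<in> perpC (cspan L)}
            in finite X \<and> card X = 0)"
    using assms(4) unfolding has_ml_degree_def by blast
  have Ps: "transpose (matrix_inv K0) = matrix_inv K0" using pd_inv[OF pd] by simp
  have "\<not> (\<forall>S\<in>U. transpose S = S \<longrightarrow> p (cmat S) = 0)"
    using vanish_open[OF pf oU PU Ps] ex by blast
  then obtain S where SU: "S \<in> U" and Ss: "transpose S = S" and pS: "p (cmat S) \<noteq> 0" by blast
  have cS: "cmat S \<in> symC" using Ss by (simp add: symC_def cmat_transpose[symmetric])
  define X where "X = reciprocal (cspan L) \<inter> {Sig + cmat S | Sig. Sig \<in> perpC (cspan L)}"
  have fc: "finite X \<and> card X = 0" using gen cS pS unfolding X_def Let_def by blast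
  then have X0: "X = {}" using card_0_eq[of X] by simp
  obtain K where KL: "K \<in> L" and Ki: "invertible K"
    and oK: "\<forall>y\<in>L. y \<bullet> (S - matrix_inv K) = 0"
    using good SU by blast
  have "cmat (matrix_inv K) \<in> X" unfolding X_def
    by (rule complex_part[OF assms(2) KL Ki Ss oK])
  with X0 show False by simp
qed

end
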